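(* Let $p>q>1$ be relatively prime integers. Then for all integers $k,l\ge 1$ we have $\mu_{(\frac{p}{q},kq)}=\mu_{(\frac{p}{q},lq)}$.
   Context: For a real number $\gamma>1$ let $T_\gamma:[0,1)\to[0,1)$, $T_\gamma(x)=\gamma x \bmod 1$. For real $\beta>1$ and an integer $n\ge 2$, the alternate base transformation $K_{(\beta,n)}:\{0,1\}\times[0,1)\to\{0,1\}\times[0,1)$ is $K_{(\beta,n)}(0,x)=(1,T_\beta(x))$, $K_{(\beta,n)}(1,x)=(0,T_n(x))$. For reals $\gamma_1,\gamma_2>1$, $T_{\gamma_1\circ\gamma_2}:=T_{\gamma_1}\circ T_{\gamma_2}$ (a piecewise linear map of constant slope $\gamma_1\gamma_2$), and $\mu_{\gamma_1\circ\gamma_2}$ denotes its unique invariant probability measure absolutely continuous with respect to Lebesgue measure. The absolutely continuous invariant probability measure $\mu_{(\beta,n)}$ of $K_{(\beta,n)}$ is given by $\mu_{(\beta,n)}(\{0\}\times A\cup\{1\}\times B)=\tfrac12\mu_{n\circ\beta}(A)+\tfrac12\mu_{\beta\circ n}(B)$ for Borel $A,B\subseteq[0,1)$. *)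

theory Defs
  imports "HOL-Probability.Probability"
begin

definition Tmap :: "real \<Rightarrow> real \<Rightarrow> real" where
  "Tmap \<gamma> x = frac (\<gamma> * x)"

definition unit_leb :: "real measure" where
  "unit_leb = restrict_space lborel {0..<1}"

definition is_acip :: "(real \<Rightarrow> real) \<Rightarrow> real measure \<Rightarrow> bool" where
  "is_acip T \<mu> \<longleftrightarrow> sets \<mu> = sets unit_leb \<and> prob_space \<mu> \<and>
     absolutely_continuous unit_leb \<mu> \<and> T \<in> measurable \<mu> \<mu> \<and> distr \<mu> \<mu> T = \<mu>"

definition acip :: "(real \<Rightarrow> real) \<Rightarrow> real measure" where
  "acip T = (THE \<mu>. is_acip T \<mu>)"

definition mu_comp :: "real \<Rightarrow> real \<Rightarrow> real measure" where
  "mu_comp \<gamma>1 \<gamma>2 = acip (Tmap \<gamma>1 \<circ> Tmap \<gamma>2)"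

text \<open>The acip mu_{(beta,n)} of the alternate base transformation K_{(beta,n)} on
  {0,1} x [0,1):  mu({0} x A u {1} x B) = 1/2 mu_{n o beta}(A) + 1/2 mu_{beta o n}(B).\<close>
definition mu_alt :: "real \<Rightarrow> int \<Rightarrow> (nat \<times> real) measure" where
  "mu_alt \<beta> n = measure_of ({0,1::nat} \<times> {0..<1})
     (sets (count_space {0,1::nat} \<Otimes>\<^sub>M unit_leb))
     (\<lambda>S. ennreal (1/2) * emeasure (mu_comp (real_of_int n) \<beta>) {x. (0, x) \<in> S}
        + ennreal (1/2) * emeasure (mu_comp \<beta> (real_of_int n)) {x. (1, x) \<in> S})"

end

theory Submission imports Defs begin

lemma space_unit_leb[simp]: "space unit_leb = {0..<1}"
  by (simp add: unit_leb_def space_restrict_space)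

lemma sets_unit_leb_iff: "A \<in> sets unit_leb \<longleftrightarrow> A \<in> sets borel \<and> A \<subseteq> {0..<1}"
  unfolding unit_leb_def by (subst sets_restrict_space_iff) auto

lemma emeasure_unit_leb: "A \<in> sets unit_leb \<Longrightarrow> emeasure unit_leb A = emeasure lborel A"
  unfolding unit_leb_def by (subst emeasure_restrict_space) (auto simp: sets_restrict_space_iff)

lemma prob_space_unit_leb: "prob_space unit_leb"
  by (rule prob_spaceI) (simp add: emeasure_unit_leb sets_unit_leb_iff)

interpretation UL: prob_space unit_leb by (rule prob_space_unit_leb)

lemma measure_unit_leb: "A \<in> sets unit_leb \<Longrightarrow> measure unit_leb A = measure lborel A"
  by (simp add: measure_def emeasure_unit_leb)

lemma Tmap_borel[measurable]: "Tmap c \<in> borel_measurable borel"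
  unfolding Tmap_def frac_def by measurable

lemma frac_borel[measurable]: "(frac :: real \<Rightarrow> real) \<in> borel_measurable borel"
  unfolding frac_def by measurable

lemma Tmap_range: "Tmap c x \<in> {0..<1}"
  by (simp add: Tmap_def frac_lt_1)

lemma Tmap_meas: "Tmap c \<in> unit_leb \<rightarrow>\<^sub>M unit_leb"
  unfolding unit_leb_def
  by (intro measurable_restrict_space1 measurable_restrict_space2) (auto simp: Tmap_def frac_lt_1)

lemma frac_int_mult_frac: "frac (of_int m * frac y) = frac (of_int m * (y::real))"
proof -
  have "of_int m * frac y = of_int m * y + of_int (- m * floor y)"
    by (simp add: frac_def algebra_simps)
  then show ?thesis by (metis frac_add_of_int_right)
qed

lemma affine_measure:
  fixes M j :: real assumes "M > 0" and B[measurable]: "B \<in> sets borel"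
  shows "emeasure lborel B = ennreal M * emeasure lborel {x::real. - j + M * x \<in> B}"
proof -
  have "emeasure lborel B = (\<integral>\<^sup>+x. indicator B x \<partial>lborel)" using assms by simp
  also have "\<dots> = ennreal \<bar>M\<bar> * (\<integral>\<^sup>+x. indicator B (- j + M * x) \<partial>lborel)"
    using assms by (subst nn_integral_real_affine[where c=M and t="-j"]) auto
  also have "(\<lambda>x. indicator B (- j + M * x) :: ennreal) = indicator {x::real. - j + M * x \<in> B}"
    by (auto simp: indicator_def)
  also have "(\<integral>\<^sup>+x. indicator {x::real. - j + M * x \<in> B} x \<partial>lborel) = emeasure lborel {x::real. - j + M * x \<in> B}"
    by (intro nn_integral_indicator) measurable
  finally show ?thesis using assms by simp
qed

lemma unit_helper: "(0::real) < M \<Longrightarrow> a \<le> x*M \<Longrightarrow> x*M < b \<Longrightarrow> 0 \<le> a \<Longrightarrow> b \<le> M \<Longrightarrow> 0 \<le> x \<and> x < 1"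
  by (smt (verit) mult_less_cancel_right2 zero_le_mult_iff)

lemma L0:
  fixes M j :: nat assumes M: "M > 0" and j: "j < M" and B: "B \<in> sets unit_leb"
  shows "measure unit_leb {x::real. real j/real M \<le> x \<and> x < (real j+1)/real M \<and> frac(M*x) \<in> B} = measure unit_leb B / M"
proof -
  have Bb[measurable]: "B \<in> sets borel" and Bs: "B \<subseteq> {0..<1}" using B by (auto simp: sets_unit_leb_iff)
  have eq: "{x::real. real j/real M \<le> x \<and> x < (real j+1)/real M \<and> frac(M*x) \<in> B} = {x::real. - real j + real M * x \<in> B}"
  proof (intro set_eqI iffI)
    fix x :: real assume x: "x \<in> {x::real. real j/real M \<le> x \<and> x < (real j+1)/real M \<and> frac(M*x) \<in> B}"
    then have "0 \<le> - real j + real M * x" "- real j + real M * x < 1"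
      using M by (auto simp: field_simps)
    then have "frac (real M * x) = - real j + real M * x"
      by (metis frac_add_of_int_left frac_eq of_int_of_nat_eq of_int_minus)
    with x show "x \<in> {x::real. - real j + real M * x \<in> B}" by auto
  next
    fix x :: real assume x: "x \<in> {x::real. - real j + real M * x \<in> B}"
    then have h: "0 \<le> - real j + real M * x" "- real j + real M * x < 1" using Bs by auto
    then have "frac (real M * x) = - real j + real M * x"
      by (metis frac_add_of_int_left frac_eq of_int_of_nat_eq of_int_minus)
    then have "frac (real M * x) \<in> B" using x by simp
    with h M show "x \<in> {x::real. real j/real M \<le> x \<and> x < (real j+1)/real M \<and> frac(M*x) \<in> B}"
      by (auto simp: field_simps)
  qed
  have S: "{x::real. real j/real M \<le> x \<and> x < (real j+1)/real M \<and> frac(M*x) \<in> B} \<in> sets unit_leb"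
  proof -
    have "{x::real. real j/real M \<le> x \<and> x < (real j+1)/real M \<and> frac(M*x) \<in> B} \<subseteq> {0..<1}"
      using M j unit_helper[of "real M" "real j" _ "real j + 1"] by (auto simp: field_simps)
    moreover have "{x::real. real j/real M \<le> x \<and> x < (real j+1)/real M \<and> frac(M*x) \<in> B} \<in> sets borel" by measurable
    ultimately show ?thesis by (simp add: sets_unit_leb_iff)
  qed
  have "emeasure lborel B = ennreal M * emeasure lborel {x::real. - real j + real M * x \<in> B}"
    using M by (intro affine_measure) auto
  then have "emeasure unit_leb B = ennreal M * emeasure unit_leb {x::real. real j/real M \<le> x \<and> x < (real j+1)/real M \<and> frac(M*x) \<in> B}"
    using B S by (simp add: emeasure_unit_leb eq)
  then have "measure unit_leb B = M * measure unit_leb {x::real. real j/real M \<le> x \<and> x < (real j+1)/real M \<and> frac(M*x) \<in> B}"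
    by (simp add: UL.emeasure_eq_measure ennreal_mult''[symmetric])
  then show ?thesis using M by (simp add: field_simps)
qed

lemma L1:
  fixes M k :: nat assumes M: "M > 0" and k: "k \<le> M" and B: "B \<in> sets unit_leb"
  shows "measure unit_leb {x::real. 0 \<le> x \<and> x < k/M \<and> frac(M*x) \<in> B} = k * measure unit_leb B / M"
  using k
proof (induction k)
  case 0
  have e0: "{x::real. 0 \<le> x \<and> x < real 0 / real M \<and> frac (real M * x) \<in> B} = {}" by auto
  show ?case unfolding e0 by simp
next
  case (Suc k)
  have Bb[measurable]: "B \<in> sets borel" using B by (auto simp: sets_unit_leb_iff)
  have kk: "real k / real M \<le> (real k+1)/real M" "0 \<le> real k/real M"
    by (simp_all add: divide_right_mono)
  have un: "{x::real. 0 \<le> x \<and> x < (Suc k)/M \<and> frac(M*x) \<in> B} =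
     {x::real. 0 \<le> x \<and> x < k/M \<and> frac(M*x) \<in> B} \<union> {x::real. real k/real M \<le> x \<and> x < (real k+1)/real M \<and> frac(M*x) \<in> B}"
  proof (intro set_eqI iffI)
    fix x :: real
    assume "x \<in> {x::real. 0 \<le> x \<and> x < (Suc k)/M \<and> frac(M*x) \<in> B}"
    then have "0 \<le> x" "x < (real k + 1)/M" "frac(M*x) \<in> B" by (simp_all add: add.commute)
    then show "x \<in> {x::real. 0 \<le> x \<and> x < k/M \<and> frac(M*x) \<in> B} \<union> {x::real. real k/real M \<le> x \<and> x < (real k+1)/real M \<and> frac(M*x) \<in> B}"
      by auto
  next
    fix x :: real
    assume "x \<in> {x::real. 0 \<le> x \<and> x < k/M \<and> frac(M*x) \<in> B} \<union> {x::real. real k/real M \<le> x \<and> x < (real k+1)/real M \<and> frac(M*x) \<in> B}"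
    then have "0 \<le> x \<and> x < (real k + 1)/M \<and> frac(M*x) \<in> B"
    proof
      assume "x \<in> {x::real. 0 \<le> x \<and> x < k/M \<and> frac(M*x) \<in> B}"
      then have "0 \<le> x" "x < real k / real M" "frac (real M * x) \<in> B" by auto
      then show ?thesis by (meson kk(1) less_le_trans)
    next
      assume "x \<in> {x::real. real k/real M \<le> x \<and> x < (real k+1)/real M \<and> frac(M*x) \<in> B}"
      then have "real k/real M \<le> x" "x < (real k+1)/real M" "frac (real M * x) \<in> B" by auto
      then show ?thesis by (meson kk(2) order_trans)
    qed
    then show "x \<in> {x::real. 0 \<le> x \<and> x < (Suc k)/M \<and> frac(M*x) \<in> B}"
      by (simp add: add.commute)
  qed
  have s1: "{x::real. 0 \<le> x \<and> x < k/M \<and> frac(M*x) \<in> B} \<in> sets unit_leb"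
  proof -
    have "{x::real. 0 \<le> x \<and> x < k/M \<and> frac(M*x) \<in> B} \<subseteq> {0..<1}"
    proof
      fix x :: real assume "x \<in> {x::real. 0 \<le> x \<and> x < k/M \<and> frac(M*x) \<in> B}"
      then have "0 \<le> x * real M" "x * real M < real k" using M by (auto simp: field_simps)
      then show "x \<in> {0..<1}" using unit_helper[of "real M" 0 x "real k"] M Suc by auto
    qed
    moreover have "{x::real. 0 \<le> x \<and> x < k/M \<and> frac(M*x) \<in> B} \<in> sets borel" by measurable
    ultimately show ?thesis by (simp add: sets_unit_leb_iff)
  qed
  have s2: "{x::real. real k/real M \<le> x \<and> x < (real k+1)/real M \<and> frac(M*x) \<in> B} \<in> sets unit_leb"
  proof -
    have "{x::real. real k/real M \<le> x \<and> x < (real k+1)/real M \<and> frac(M*x) \<in> B} \<subseteq> {0..<1}"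
    proof
      fix x :: real assume "x \<in> {x::real. real k/real M \<le> x \<and> x < (real k+1)/real M \<and> frac(M*x) \<in> B}"
      then have "real k \<le> x * real M" "x * real M < real k + 1" using M by (auto simp: field_simps)
      then show "x \<in> {0..<1}" using unit_helper[of "real M" "real k" x "real k + 1"] M Suc by auto
    qed
    moreover have "{x::real. real k/real M \<le> x \<and> x < (real k+1)/real M \<and> frac(M*x) \<in> B} \<in> sets borel" by measurable
    ultimately show ?thesis by (simp add: sets_unit_leb_iff)
  qed
  have "measure unit_leb {x::real. 0 \<le> x \<and> x < (Suc k)/M \<and> frac(M*x) \<in> B} =
     measure unit_leb {x::real. 0 \<le> x \<and> x < k/M \<and> frac(M*x) \<in> B} + measure unit_leb {x::real. real k/real M \<le> x \<and> x < (real k+1)/real M \<and> frac(M*x) \<in> B}"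
    unfolding un by (intro UL.finite_measure_Union s1 s2) auto
  also have "\<dots> = k * measure unit_leb B / M + measure unit_leb B / M"
    using Suc M B by (simp add: L0)
  finally show ?case using M by (simp add: field_simps)
qed

lemma Tmap_pre: "Tmap c -` A \<inter> {0..<1} = {x::real. 0 \<le> x \<and> x < 1 \<and> frac (c * x) \<in> A}"
  by (auto simp: Tmap_def)

lemma lambda_inv:
  fixes M :: nat assumes M: "M > 0"
  shows "distr unit_leb unit_leb (Tmap M) = unit_leb"
proof (rule measure_eqI)
  fix A assume A: "A \<in> sets (distr unit_leb unit_leb (Tmap M))"
  then have A': "A \<in> sets unit_leb" by simp
  have "emeasure (distr unit_leb unit_leb (Tmap M)) A = emeasure unit_leb (Tmap M -` A \<inter> space unit_leb)"
    using A' by (simp add: emeasure_distr Tmap_meas)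
  also have "Tmap M -` A \<inter> space unit_leb = {x::real. 0 \<le> x \<and> x < real M / real M \<and> frac (real M * x) \<in> A}"
    using M by (simp add: Tmap_pre)
  also have "emeasure unit_leb \<dots> = emeasure unit_leb A"
    using M A' L1[of M M A] by (simp add: UL.emeasure_eq_measure del: div_self)
  finally show "emeasure (distr unit_leb unit_leb (Tmap M)) A = emeasure unit_leb A" .
qed simp

lemma affine_measure':
  fixes M j :: real assumes "M \<noteq> 0" and B[measurable]: "B \<in> sets borel"
  shows "emeasure lborel B = ennreal \<bar>M\<bar> * emeasure lborel {x. - j + M * x \<in> B}"
proof -
  have "emeasure lborel B = (\<integral>\<^sup>+x. indicator B x \<partial>lborel)" using assms by simp
  also have "\<dots> = ennreal \<bar>M\<bar> * (\<integral>\<^sup>+x. indicator B (- j + M * x) \<partial>lborel)"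
    using assms by (subst nn_integral_real_affine[where c=M and t="-j"]) auto
  also have "(\<lambda>x. indicator B (- j + M * x) :: ennreal) = indicator {x. - j + M * x \<in> B}"
    by (auto simp: indicator_def)
  also have "(\<integral>\<^sup>+x. indicator {x. - j + M * x \<in> B} x \<partial>lborel) = emeasure lborel {x. - j + M * x \<in> B}"
    by (intro nn_integral_indicator) measurable
  finally show ?thesis using assms by simp
qed

lemma Tmap_null:
  assumes c: "c \<noteq> 0" and S: "S \<in> sets unit_leb" and S0: "emeasure unit_leb S = 0"
  shows "emeasure unit_leb (Tmap c -` S \<inter> space unit_leb) = 0"
proof -
  have Sb[measurable]: "S \<in> sets borel" using S by (auto simp: sets_unit_leb_iff)
  have S0': "emeasure lborel S = 0" using S S0 by (simp add: emeasure_unit_leb)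
  have nj: "{x. - real_of_int j + c * x \<in> S} \<in> null_sets lborel" for j
  proof -
    have m: "{x. - real_of_int j + c * x \<in> S} \<in> sets lborel" by measurable
    have "ennreal \<bar>c\<bar> * emeasure lborel {x. - real_of_int j + c * x \<in> S} = 0"
      using affine_measure'[OF c Sb, of "real_of_int j"] S0' by simp
    then have "emeasure lborel {x. - real_of_int j + c * x \<in> S} = 0"
      using c by (simp add: mult_eq_0_iff)
    with m show ?thesis by (simp add: null_sets_def)
  qed
  have U: "(\<Union>j::int. {x. - real_of_int j + c * x \<in> S}) \<in> null_sets lborel"
    by (rule null_sets_UN') (use nj in auto)
  have P: "Tmap c -` S \<inter> space unit_leb \<in> sets unit_leb"
    using Tmap_meas S by (rule measurable_sets)
  have sub: "Tmap c -` S \<inter> space unit_leb \<subseteq> (\<Union>j::int. {x. - real_of_int j + c * x \<in> S})"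
  proof
    fix x assume "x \<in> Tmap c -` S \<inter> space unit_leb"
    then have "- real_of_int (floor (c*x)) + c * x \<in> S" by (simp add: Tmap_def frac_def)
    then show "x \<in> (\<Union>j::int. {x. - real_of_int j + c * x \<in> S})" by blast
  qed
  have "Tmap c -` S \<inter> space unit_leb \<in> null_sets lborel"
    using P U sub by (intro null_sets_subset[OF U]) (auto simp: sets_unit_leb_iff)
  then show ?thesis using P by (simp add: emeasure_unit_leb null_sets_def)
qed

lemma acip_lambda:
  fixes M :: nat assumes "M > 0"
  shows "is_acip (Tmap M) unit_leb"
  unfolding is_acip_def using assms
  by (auto simp: prob_space_unit_leb Tmap_meas lambda_inv absolutely_continuous_def)



definition EE :: "nat \<Rightarrow> nat \<Rightarrow> real set \<Rightarrow> real set" where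
  "EE N n B = Tmap (real N ^ n) -` B \<inter> {0..<1}"

lemma EE_sets: "B \<in> sets unit_leb \<Longrightarrow> EE N n B \<in> sets unit_leb"
  unfolding EE_def using measurable_sets[OF Tmap_meas, of B "real N ^ n"] by simp

lemma EE_sub: "EE N n B \<subseteq> {0..<1}"
  unfolding EE_def by auto

lemma mix_basic:
  fixes N n :: nat assumes N: "N \<ge> 1" and B: "B \<in> sets unit_leb"
  shows "\<bar>measure unit_leb ({0..<1} \<inter> {..<a} \<inter> EE N n B) - measure unit_leb ({0..<1} \<inter> {..<a}) * measure unit_leb B\<bar> \<le> 1 / real N ^ n"
proof -
  define M where "M = N ^ n"
  have M0: "M > 0" using N by (simp add: M_def)
  have rM: "real N ^ n = real M" by (simp add: M_def)
  have mB: "0 \<le> measure unit_leb B" "measure unit_leb B \<le> 1" by auto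
  have setk: "{0..<1} \<inter> {..<real k / real M} \<inter> EE N n B = {x::real. 0 \<le> x \<and> x < real k / real M \<and> frac (real M * x) \<in> B}"
    if "k \<le> M" for k
  proof -
    have "real k / real M \<le> 1" using that M0 by simp
    then show ?thesis by (auto simp: EE_def Tmap_def rM)
  qed
  have Gs: "{0..<1} \<inter> {..<c} \<in> sets unit_leb" for c :: real
    by (simp add: sets_unit_leb_iff)
  have GEs: "{0..<1} \<inter> {..<c} \<inter> EE N n B \<in> sets unit_leb" for c :: real
    by (intro sets.Int Gs EE_sets B)
  have Sk: "{x::real. 0 \<le> x \<and> x < real k / real M \<and> frac (real M * x) \<in> B} \<in> sets unit_leb"
    if "k \<le> M" for k
    unfolding setk[OF that, symmetric] by (rule GEs)
  consider "a \<le> 0" | "a \<ge> 1" | "0 < a" "a < 1" by linarith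
  then show ?thesis
  proof cases
    case 1
    then have "{0..<1} \<inter> {..<a} = {}" by auto
    then show ?thesis using M0 by simp
  next
    case 2
    then have e: "{0..<1} \<inter> {..<a} = {0..<1}" by auto
    have MM: "real M / real M = 1" using M0 by simp
    have h1: "{0..<1} \<inter> {..<a} \<inter> EE N n B = EE N n B"
      using e EE_sub[of N n B] by blast
    have h2: "{0..<1} \<inter> {..<real M / real M} \<inter> EE N n B = EE N n B"
      unfolding MM using EE_sub[of N n B] by (auto simp: subset_iff)
    have "measure unit_leb (EE N n B) = real M * measure unit_leb B / real M"
      using L1[OF M0 order.refl B] setk[OF order.refl] h2 by simp
    then have m1: "measure unit_leb ({0..<1} \<inter> {..<a} \<inter> EE N n B) = measure unit_leb B"
      unfolding h1 using M0 by simp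
    have m2: "measure unit_leb ({0..<1} \<inter> {..<a}) = 1" unfolding e using UL.prob_space by simp
    show ?thesis unfolding m1 m2 by simp
  next
    case 3
    define k where "k = nat \<lfloor>a * M\<rfloor>"
    have aM: "0 < a * M" "a * M < M" using 3 M0 by auto
    have fl0: "0 \<le> \<lfloor>a * M\<rfloor>" using aM by simp
    have rk: "real k = real_of_int \<lfloor>a * M\<rfloor>" unfolding k_def using fl0 by simp
    have k1: "real k \<le> a * M" "a * M < real k + 1" unfolding rk by (rule of_int_floor_le, rule real_of_int_floor_add_one_gt)
    have kM: "k + 1 \<le> M"
    proof -
      have "real k < real M" using k1 aM by linarith
      then show ?thesis by simp
    qed
    have kM': "k \<le> M" using kM by simp
    have ka: "real k / real M \<le> a" "a < (real k + 1) / real M"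
      using k1 M0 by (simp_all add: pos_divide_le_eq pos_less_divide_eq)
    have sub1: "{x::real. 0 \<le> x \<and> x < real k / real M \<and> frac (real M * x) \<in> B} \<subseteq> {0..<1} \<inter> {..<a} \<inter> EE N n B"
      unfolding setk[OF kM', symmetric] using ka(1) by auto
    have sub2: "{0..<1} \<inter> {..<a} \<inter> EE N n B \<subseteq> {x::real. 0 \<le> x \<and> x < real (k+1) / real M \<and> frac (real M * x) \<in> B}"
      unfolding setk[OF kM, symmetric] using ka(2) by (auto simp: add.commute)
    have F1: "real k * measure unit_leb B / real M \<le> measure unit_leb ({0..<1} \<inter> {..<a} \<inter> EE N n B)"
      using UL.finite_measure_mono[OF sub1 GEs] L1[OF M0 _ B, of k] kM by simp
    have F2: "measure unit_leb ({0..<1} \<inter> {..<a} \<inter> EE N n B) \<le> real (k+1) * measure unit_leb B / real M"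
      using UL.finite_measure_mono[OF sub2 Sk[OF kM]] L1[OF M0 kM B] by simp
    have F1': "real k / real M * measure unit_leb B \<le> measure unit_leb ({0..<1} \<inter> {..<a} \<inter> EE N n B)"
      using F1 by simp
    have F2': "measure unit_leb ({0..<1} \<inter> {..<a} \<inter> EE N n B) \<le> (real k + 1) / real M * measure unit_leb B"
      using F2 by (simp add: add.commute)
    have mG: "measure unit_leb ({0..<1} \<inter> {..<a}) = a"
    proof -
      have "{0..<1} \<inter> {..<a} = {0..<a}" using 3 by auto
      then show ?thesis using 3 by (simp add: measure_unit_leb sets_unit_leb_iff)
    qed
    have A1: "real k / real M * measure unit_leb B \<le> a * measure unit_leb B"
      using ka mB by (intro mult_right_mono) auto
    have A2: "a * measure unit_leb B \<le> (real k + 1) / real M * measure unit_leb B"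
      using ka mB by (intro mult_right_mono) auto
    have D: "(real k + 1) / real M * measure unit_leb B - real k / real M * measure unit_leb B = measure unit_leb B / real M"
      by (simp add: add_divide_distrib ring_distribs)
    have D2: "measure unit_leb B / real M \<le> 1 / real M"
      using mB M0 by (simp add: divide_right_mono)
    show ?thesis unfolding mG rM abs_le_iff using F1' F2' A1 A2 D D2 by linarith
  qed
qed

lemma sets_unit_leb_sigma:
  "sets unit_leb = sigma_sets {0..<1} (range (\<lambda>a. {0..<1::real} \<inter> {..<a}))"
proof -
  have "sets unit_leb = (\<inter>) {0..<1} ` sets borel"
    unfolding unit_leb_def by (simp add: sets_restrict_space)
  also have "sets (borel :: real measure) = sigma_sets UNIV (range lessThan)"
    by (subst borel_Iio) (simp add: sets_measure_of)
  also have "(\<inter>) {0..<1::real} ` sigma_sets UNIV (range lessThan) = sigma_sets {0..<1} ((\<inter>) {0..<1} ` range lessThan)"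
  proof (rule sigma_sets_Int)
    have "{0..<1::real} \<in> sets borel" by simp
    then show "{0..<1::real} \<in> sigma_sets UNIV (range lessThan)"
      by (subst (asm) borel_Iio) (simp add: sets_measure_of)
  qed simp
  also have "(\<inter>) {0..<1::real} ` range lessThan = range (\<lambda>a. {0..<1::real} \<inter> {..<a})"
    by auto
  finally show ?thesis .
qed

lemma mix:
  fixes N :: nat assumes N: "N \<ge> 2" and A: "A \<in> sets unit_leb" and B: "B \<in> sets unit_leb"
  shows "(\<lambda>n. measure unit_leb (A \<inter> EE N n B)) \<longlonglongrightarrow> measure unit_leb A * measure unit_leb B"
proof -
  have lim0: "(\<lambda>n. 1 / real N ^ n) \<longlonglongrightarrow> 0"
    using LIMSEQ_inverse_realpow_zero[of "real N"] N by (simp add: divide_inverse)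
  have basicG: "(\<lambda>n. measure unit_leb ({0..<1} \<inter> {..<a} \<inter> EE N n B)) \<longlonglongrightarrow>
      measure unit_leb ({0..<1} \<inter> {..<a}) * measure unit_leb B" for a
  proof (rule LIM_zero_cancel, rule Lim_null_comparison[OF _ lim0])
    show "\<forall>\<^sub>F n in sequentially. norm (measure unit_leb ({0..<1} \<inter> {..<a} \<inter> EE N n B) - measure unit_leb ({0..<1} \<inter> {..<a}) * measure unit_leb B) \<le> 1 / real N ^ n"
      using mix_basic[of N B a] N B by (intro always_eventually) auto
  qed
  have EEall: "(\<lambda>n. measure unit_leb (EE N n B)) \<longlonglongrightarrow> measure unit_leb B"
  proof -
    have "{0..<1} \<inter> {..<1} \<inter> EE N n B = EE N n B" for n using EE_sub[of N n B] by auto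
    moreover have "measure unit_leb ({0..<1::real} \<inter> {..<1}) = 1"
      using UL.prob_space by (simp add: Int_absorb2 lessThan_def subset_eq)
    ultimately show ?thesis using basicG[of 1] by simp
  qed
  have Ast: "Int_stable (range (\<lambda>a. {0..<1::real} \<inter> {..<a}))"
  proof (rule Int_stableI)
    fix X Y assume "X \<in> range (\<lambda>a. {0..<1::real} \<inter> {..<a})" "Y \<in> range (\<lambda>a. {0..<1::real} \<inter> {..<a})"
    then obtain a b where "X = {0..<1} \<inter> {..<a}" "Y = {0..<1} \<inter> {..<b}" by auto
    then have "X \<inter> Y = {0..<1} \<inter> {..<min a b}" by auto
    then show "X \<inter> Y \<in> range (\<lambda>a. {0..<1::real} \<inter> {..<a})" by blast
  qed
  have Asig: "A \<in> sigma_sets {0..<1} (range (\<lambda>a. {0..<1::real} \<inter> {..<a}))"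
    using A sets_unit_leb_sigma by simp
  have Gsub: "range (\<lambda>a. {0..<1::real} \<inter> {..<a}) \<subseteq> Pow {0..<1}" by auto
  from Ast Gsub Asig show ?thesis
  proof (induction rule: sigma_sets_induct_disjoint)
    case (basic A)
    then obtain a where "A = {0..<1} \<inter> {..<a}" by auto
    then show ?case using basicG[of a] by simp
  next
    case empty
    then show ?case by simp
  next
    case (compl A)
    have As: "A \<in> sets unit_leb" using compl(1) sets_unit_leb_sigma by simp
    have eq: "measure unit_leb (({0..<1} - A) \<inter> EE N n B) = measure unit_leb (EE N n B) - measure unit_leb (A \<inter> EE N n B)" for n
    proof -
      have "({0..<1} - A) \<inter> EE N n B = EE N n B - (A \<inter> EE N n B)" using EE_sub by auto
      then show ?thesis using As EE_sets[OF B] by (simp add: UL.finite_measure_Diff)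
    qed
    have c1: "measure unit_leb ({0..<1} - A) = 1 - measure unit_leb A"
      using UL.prob_compl[OF As] by simp
    have c2: "measure unit_leb B - measure unit_leb A * measure unit_leb B = measure unit_leb ({0..<1} - A) * measure unit_leb B"
      unfolding c1 by (simp add: algebra_simps)
    show ?case unfolding eq using tendsto_diff[OF EEall compl(2)] unfolding c2 .
  next
    case (union AA)
    have As: "AA i \<in> sets unit_leb" for i using union(2) sets_unit_leb_sigma by auto
    have sm: "(\<lambda>i. measure unit_leb (AA i)) sums measure unit_leb (\<Union>i. AA i)"
      using As union(1) by (intro UL.finite_measure_UNION) auto
    have eqn: "measure unit_leb ((\<Union>i. AA i) \<inter> EE N n B) = (\<Sum>i. measure unit_leb (AA i \<inter> EE N n B))" for n
    proof -
      have "(\<lambda>i. measure unit_leb (AA i \<inter> EE N n B)) sums measure unit_leb (\<Union>i. AA i \<inter> EE N n B)"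
      proof (intro UL.finite_measure_UNION)
        show "range (\<lambda>i. AA i \<inter> EE N n B) \<subseteq> sets unit_leb" using As EE_sets[OF B] by auto
        show "disjoint_family (\<lambda>i. AA i \<inter> EE N n B)" using union(1) unfolding disjoint_family_on_def by blast
      qed
      then show ?thesis by (simp add: sums_iff)
    qed
    have T: "(\<lambda>n. \<Sum>i. measure unit_leb (AA i \<inter> EE N n B)) \<longlonglongrightarrow> (\<Sum>i. measure unit_leb (AA i) * measure unit_leb B)"
    proof -
      have "eventually (\<lambda>n. summable (\<lambda>k. norm (measure unit_leb (AA k \<inter> EE N n B)))) sequentially \<and>
           summable (\<lambda>n. norm (measure unit_leb (AA n) * measure unit_leb B)) \<and>
           ((\<lambda>n. suminf (\<lambda>k. measure unit_leb (AA k \<inter> EE N n B))) \<longlonglongrightarrow> suminf (\<lambda>k. measure unit_leb (AA k) * measure unit_leb B))"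
      proof (rule tannerys_theorem)
        show "\<And>k. (\<lambda>n. measure unit_leb (AA k \<inter> EE N n B)) \<longlonglongrightarrow> measure unit_leb (AA k) * measure unit_leb B"
          by (rule union(3))
        show "\<forall>\<^sub>F (k, n) in at_top \<times>\<^sub>F sequentially. norm (measure unit_leb (AA k \<inter> EE N n B)) \<le> measure unit_leb (AA k)"
          using As EE_sets[OF B] by (intro always_eventually) (auto intro!: UL.finite_measure_mono)
        show "summable (\<lambda>k. measure unit_leb (AA k))" using sm by (simp add: sums_iff)
      qed simp
      then show ?thesis by blast
    qed
    have "(\<Sum>i. measure unit_leb (AA i) * measure unit_leb B) = measure unit_leb (\<Union>i. AA i) * measure unit_leb B"
      using sm by (metis sums_iff suminf_mult2)
    then show ?case using T by (simp add: eqn)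
  qed
qed

lemma frac_pow_step: "frac (real N ^ n * frac (real N * x)) = frac (real N ^ Suc n * x)"
proof -
  have "frac (real_of_int (int (N ^ n)) * frac (real N * x)) = frac (real_of_int (int (N ^ n)) * (real N * x))"
    by (rule frac_int_mult_frac)
  then show ?thesis by (simp add: mult.assoc mult.commute mult.left_commute)
qed

lemma EE_inv:
  fixes N :: nat assumes mu: "is_acip (Tmap N) \<mu>" and B: "B \<in> sets unit_leb"
  shows "emeasure \<mu> (EE N n B) = emeasure \<mu> B"
proof (induction n)
  case 0
  have Bs: "B \<subseteq> {0..<1}" using B by (simp add: sets_unit_leb_iff)
  have "EE N 0 B = B"
  proof (intro set_eqI iffI)
    fix x assume "x \<in> EE N 0 B"
    then have "0 \<le> x" "x < 1" "frac x \<in> B" by (auto simp: EE_def Tmap_def)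
    then show "x \<in> B" by (simp add: frac_eq)
  next
    fix x assume x: "x \<in> B"
    then have "0 \<le> x" "x < 1" using Bs by auto
    then show "x \<in> EE N 0 B" using x by (simp add: EE_def Tmap_def frac_eq)
  qed
  then show ?case by simp
next
  case (Suc n)
  have smu: "sets \<mu> = sets unit_leb" and fmu: "Tmap N \<in> \<mu> \<rightarrow>\<^sub>M \<mu>" and imu: "distr \<mu> \<mu> (Tmap N) = \<mu>"
    using mu by (auto simp: is_acip_def)
  have spmu: "space \<mu> = {0..<1}" using sets_eq_imp_space_eq[OF smu] by simp
  have eq: "EE N (Suc n) B = Tmap N -` (EE N n B) \<inter> space \<mu>"
    unfolding spmu EE_def by (auto simp: Tmap_def frac_lt_1 frac_pow_step)
  have C: "EE N n B \<in> sets \<mu>" using EE_sets[OF B] smu by simp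
  have "emeasure \<mu> (EE N (Suc n) B) = emeasure (distr \<mu> \<mu> (Tmap N)) (EE N n B)"
    unfolding eq using C fmu by (simp add: emeasure_distr)
  also have "\<dots> = emeasure \<mu> (EE N n B)" using imu by simp
  finally show ?case using Suc by simp
qed

lemma simple_T:
  fixes N :: nat assumes N: "N \<ge> 2" and B: "B \<in> sets unit_leb"
    and u: "simple_function unit_leb u"
  shows "(\<forall>x\<in>space unit_leb. u x < top) \<longrightarrow>
    (\<lambda>n. \<integral>\<^sup>+ y. u y * indicator (EE N n B) y \<partial>unit_leb) \<longlonglongrightarrow> emeasure unit_leb B * (\<integral>\<^sup>+ y. u y \<partial>unit_leb)"
  using u
proof (induction rule: simple_function_induct_nn)
  case (cong f g)
  have "(\<integral>\<^sup>+ y. g y * indicator (EE N n B) y \<partial>unit_leb) = (\<integral>\<^sup>+ y. f y * indicator (EE N n B) y \<partial>unit_leb)" for n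
    using cong(3) by (intro nn_integral_cong) simp
  moreover have "(\<integral>\<^sup>+ y. g y \<partial>unit_leb) = (\<integral>\<^sup>+ y. f y \<partial>unit_leb)"
    using cong(3) by (intro nn_integral_cong) simp
  ultimately show ?case using cong(3,4) by simp
next
  case (set A)
  have eq1: "(\<integral>\<^sup>+ y. indicator A y * indicator (EE N n B) y \<partial>unit_leb) = ennreal (measure unit_leb (A \<inter> EE N n B))" for n
  proof -
    have "(\<integral>\<^sup>+ y. indicator A y * indicator (EE N n B) y \<partial>unit_leb) = (\<integral>\<^sup>+ y. indicator (A \<inter> EE N n B) y \<partial>unit_leb)"
      by (simp add: indicator_inter_arith)
    also have "\<dots> = emeasure unit_leb (A \<inter> EE N n B)"
      using set EE_sets[OF B] by (intro nn_integral_indicator) auto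
    finally show ?thesis by (simp add: UL.emeasure_eq_measure)
  qed
  have eq2: "emeasure unit_leb B * (\<integral>\<^sup>+ y. indicator A y \<partial>unit_leb) = ennreal (measure unit_leb A * measure unit_leb B)"
    using set by (simp add: UL.emeasure_eq_measure ennreal_mult''[symmetric] mult.commute)
  show ?case unfolding eq1 eq2 using mix[OF N set B] by (intro impI tendsto_ennrealI)
next
  case (mult u c)
  show ?case
  proof
    assume fin: "\<forall>x\<in>space unit_leb. c * u x < top"
    show "(\<lambda>n. \<integral>\<^sup>+ y. c * u y * indicator (EE N n B) y \<partial>unit_leb) \<longlonglongrightarrow> emeasure unit_leb B * (\<integral>\<^sup>+ y. c * u y \<partial>unit_leb)"
    proof (cases "\<forall>x\<in>space unit_leb. c * u x = 0")
      case True
      have "(\<integral>\<^sup>+ y. c * u y * indicator (EE N n B) y \<partial>unit_leb) = 0" for n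
      proof -
        have "(\<integral>\<^sup>+ y. c * u y * indicator (EE N n B) y \<partial>unit_leb) = (\<integral>\<^sup>+ y. 0 \<partial>unit_leb)"
          using True by (intro nn_integral_cong) auto
        then show ?thesis by simp
      qed
      moreover have "(\<integral>\<^sup>+ y. c * u y \<partial>unit_leb) = 0"
      proof -
        have "(\<integral>\<^sup>+ y. c * u y \<partial>unit_leb) = (\<integral>\<^sup>+ y. 0 \<partial>unit_leb)"
          using True by (intro nn_integral_cong) auto
        then show ?thesis by simp
      qed
      ultimately show ?thesis by simp
    next
      case False
      then obtain x0 where x0: "x0 \<in> space unit_leb" "c * u x0 \<noteq> 0" by auto
      then have c0: "c \<noteq> 0" by auto
      have ct: "c < top" using fin x0 by (auto simp: ennreal_mult_less_top)
      have ufin: "\<forall>x\<in>space unit_leb. u x < top"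
        using fin c0 by (auto simp: ennreal_mult_less_top)
      have um: "u \<in> borel_measurable unit_leb" using mult(1) by (rule borel_measurable_simple_function)
      have Em: "indicator (EE N n B) \<in> borel_measurable unit_leb" for n
        using EE_sets[OF B] by simp
      have L: "(\<lambda>n. c * (\<integral>\<^sup>+ y. u y * indicator (EE N n B) y \<partial>unit_leb)) \<longlonglongrightarrow> c * (emeasure unit_leb B * (\<integral>\<^sup>+ y. u y \<partial>unit_leb))"
        using mult(2) ufin c0 ct by (intro tendsto_mult_ennreal tendsto_const) auto
      have e1: "(\<integral>\<^sup>+ y. c * u y * indicator (EE N n B) y \<partial>unit_leb) = c * (\<integral>\<^sup>+ y. u y * indicator (EE N n B) y \<partial>unit_leb)" for n
      proof -
        have "(\<lambda>y. u y * indicator (EE N n B) y) \<in> borel_measurable unit_leb"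
          using um Em[of n] by (rule borel_measurable_times_ennreal)
        then have "(\<integral>\<^sup>+ y. c * (u y * indicator (EE N n B) y) \<partial>unit_leb) = c * (\<integral>\<^sup>+ y. u y * indicator (EE N n B) y \<partial>unit_leb)"
          by (rule nn_integral_cmult)
        then show ?thesis by (simp add: mult.assoc)
      qed
      have e2: "emeasure unit_leb B * (\<integral>\<^sup>+ y. c * u y \<partial>unit_leb) = c * (emeasure unit_leb B * (\<integral>\<^sup>+ y. u y \<partial>unit_leb))"
        using um by (simp add: nn_integral_cmult mult.left_commute)
      show ?thesis unfolding e1 e2 by (rule L)
    qed
  qed
next
  case (add u v)
  show ?case
  proof
    assume fin: "\<forall>x\<in>space unit_leb. v x + u x < top"
    have uf: "\<forall>x\<in>space unit_leb. u x < top" and vf: "\<forall>x\<in>space unit_leb. v x < top" using fin by auto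
    have um: "u \<in> borel_measurable unit_leb" using \<open>simple_function unit_leb u\<close> by (rule borel_measurable_simple_function)
    have vm: "v \<in> borel_measurable unit_leb" using \<open>simple_function unit_leb v\<close> by (rule borel_measurable_simple_function)
    have Em: "indicator (EE N n B) \<in> borel_measurable unit_leb" for n
      using EE_sets[OF B] by simp
    have e1: "(\<integral>\<^sup>+ y. (v y + u y) * indicator (EE N n B) y \<partial>unit_leb) =
        (\<integral>\<^sup>+ y. v y * indicator (EE N n B) y \<partial>unit_leb) + (\<integral>\<^sup>+ y. u y * indicator (EE N n B) y \<partial>unit_leb)" for n
    proof -
      have "(\<lambda>y. v y * indicator (EE N n B) y) \<in> borel_measurable unit_leb"
        using vm Em[of n] by (rule borel_measurable_times_ennreal)
      moreover have "(\<lambda>y. u y * indicator (EE N n B) y) \<in> borel_measurable unit_leb"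
        using um Em[of n] by (rule borel_measurable_times_ennreal)
      ultimately have "(\<integral>\<^sup>+ y. v y * indicator (EE N n B) y + u y * indicator (EE N n B) y \<partial>unit_leb) =
        (\<integral>\<^sup>+ y. v y * indicator (EE N n B) y \<partial>unit_leb) + (\<integral>\<^sup>+ y. u y * indicator (EE N n B) y \<partial>unit_leb)"
        by (rule nn_integral_add)
      then show ?thesis by (simp add: distrib_right)
    qed
    have e2: "emeasure unit_leb B * (\<integral>\<^sup>+ y. v y + u y \<partial>unit_leb) =
        emeasure unit_leb B * (\<integral>\<^sup>+ y. v y \<partial>unit_leb) + emeasure unit_leb B * (\<integral>\<^sup>+ y. u y \<partial>unit_leb)"
      using um vm by (simp add: nn_integral_add distrib_left)
    show "(\<lambda>n. \<integral>\<^sup>+ y. (v y + u y) * indicator (EE N n B) y \<partial>unit_leb) \<longlonglongrightarrow> emeasure unit_leb B * (\<integral>\<^sup>+ y. v y + u y \<partial>unit_leb)"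
      unfolding e1 e2 using add.IH uf vf by (intro tendsto_add) auto
  qed
qed

lemma lower_T:
  fixes N :: nat assumes N: "N \<ge> 2" and B: "B \<in> sets unit_leb"
    and h: "h \<in> borel_measurable unit_leb" and x: "x < emeasure unit_leb B * (\<integral>\<^sup>+ y. h y \<partial>unit_leb)"
  shows "eventually (\<lambda>n. x < (\<integral>\<^sup>+ y. h y * indicator (EE N n B) y \<partial>unit_leb)) sequentially"
proof -
  obtain U where U: "\<And>i. simple_function unit_leb (U i)" "incseq U" "\<And>i x. U i x < top"
    and sup: "\<And>x. (SUP i. U i x) = h x"
    using borel_measurable_implies_simple_function_sequence'[OF h] by blast
  have Um: "\<And>i. U i \<in> borel_measurable unit_leb" using U(1) by (rule borel_measurable_simple_function)
  have "(\<integral>\<^sup>+ y. h y \<partial>unit_leb) = (\<integral>\<^sup>+ y. (SUP i. U i y) \<partial>unit_leb)" using sup by simp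
  also have "\<dots> = (SUP i. \<integral>\<^sup>+ y. U i y \<partial>unit_leb)"
    using U(2) Um by (rule nn_integral_monotone_convergence_SUP)
  finally have "x < emeasure unit_leb B * (SUP i. \<integral>\<^sup>+ y. U i y \<partial>unit_leb)" using x by simp
  then have "x < (SUP i. emeasure unit_leb B * (\<integral>\<^sup>+ y. U i y \<partial>unit_leb))"
    by (simp add: SUP_mult_left_ennreal)
  then obtain i where i: "x < emeasure unit_leb B * (\<integral>\<^sup>+ y. U i y \<partial>unit_leb)"
    by (auto simp: less_SUP_iff)
  have T: "(\<lambda>n. \<integral>\<^sup>+ y. U i y * indicator (EE N n B) y \<partial>unit_leb) \<longlonglongrightarrow> emeasure unit_leb B * (\<integral>\<^sup>+ y. U i y \<partial>unit_leb)"
    using simple_T[OF N B U(1)[of i]] U(3) by blast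
  have ev: "eventually (\<lambda>n. x < (\<integral>\<^sup>+ y. U i y * indicator (EE N n B) y \<partial>unit_leb)) sequentially"
    using order_tendstoD(1)[OF T i] .
  have le: "(\<integral>\<^sup>+ y. U i y * indicator (EE N n B) y \<partial>unit_leb) \<le> (\<integral>\<^sup>+ y. h y * indicator (EE N n B) y \<partial>unit_leb)" for n
  proof (intro nn_integral_mono mult_right_mono)
    fix y
    show "U i y \<le> h y" unfolding sup[symmetric] by (rule SUP_upper) simp
  qed simp
  show ?thesis using ev by eventually_elim (use le in \<open>blast intro: order.strict_trans2\<close>)
qed

lemma acip_unique:
  fixes N :: nat assumes N: "N \<ge> 2" and mu: "is_acip (Tmap N) \<mu>"
  shows "\<mu> = unit_leb"
proof -
  have smu: "sets \<mu> = sets unit_leb" and pmu: "prob_space \<mu>"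
    and acmu: "absolutely_continuous unit_leb \<mu>"
    using mu by (auto simp: is_acip_def)
  have spmu: "space \<mu> = {0..<1}" using sets_eq_imp_space_eq[OF smu] by simp
  interpret P: prob_space \<mu> by (rule pmu)
  obtain h where h: "h \<in> borel_measurable unit_leb" and dh: "density unit_leb h = \<mu>"
    using UL.Radon_Nikodym[OF acmu smu] by blast
  have emu: "emeasure \<mu> A = (\<integral>\<^sup>+ y. h y * indicator A y \<partial>unit_leb)" if "A \<in> sets unit_leb" for A
    using that h dh[symmetric] by (simp add: emeasure_density)
  have int1: "(\<integral>\<^sup>+ y. h y \<partial>unit_leb) = 1"
  proof -
    have "(\<integral>\<^sup>+ y. h y \<partial>unit_leb) = (\<integral>\<^sup>+ y. h y * indicator {0..<1} y \<partial>unit_leb)"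
      by (intro nn_integral_cong) (simp add: indicator_def)
    also have "\<dots> = emeasure \<mu> {0..<1}" using emu[of "{0..<1}"] by (simp add: sets_unit_leb_iff)
    also have "\<dots> = 1" using P.emeasure_space_1 spmu by simp
    finally show ?thesis .
  qed
  have ge: "emeasure unit_leb B \<le> emeasure \<mu> B" if B: "B \<in> sets unit_leb" for B
  proof (rule ccontr)
    assume "\<not> emeasure unit_leb B \<le> emeasure \<mu> B"
    then have "emeasure \<mu> B < emeasure unit_leb B * (\<integral>\<^sup>+ y. h y \<partial>unit_leb)" using int1 by simp
    from lower_T[OF N B h this] obtain n0 where
      "\<And>n. n \<ge> n0 \<Longrightarrow> emeasure \<mu> B < (\<integral>\<^sup>+ y. h y * indicator (EE N n B) y \<partial>unit_leb)"
      by (auto simp: eventually_sequentially)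
    then have "emeasure \<mu> B < (\<integral>\<^sup>+ y. h y * indicator (EE N n0 B) y \<partial>unit_leb)" by simp
    also have "\<dots> = emeasure \<mu> (EE N n0 B)" using emu[OF EE_sets[OF B]] by simp
    also have "\<dots> = emeasure \<mu> B" by (rule EE_inv[OF mu B])
    finally show False by simp
  qed
  show ?thesis
  proof (rule measure_eqI)
    show "sets \<mu> = sets unit_leb" by (rule smu)
    fix A assume "A \<in> sets \<mu>"
    then have A: "A \<in> sets unit_leb" using smu by simp
    have Ac: "{0..<1} - A \<in> sets unit_leb" using A by (auto simp: sets_unit_leb_iff)
    have r1: "measure unit_leb A \<le> measure \<mu> A"
      using ge[OF A] P.emeasure_eq_measure[of A] UL.emeasure_eq_measure[of A]
      by simp
    have r2: "measure unit_leb ({0..<1} - A) \<le> measure \<mu> ({0..<1} - A)"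
      using ge[OF Ac] P.emeasure_eq_measure[of "{0..<1} - A"] UL.emeasure_eq_measure[of "{0..<1} - A"]
      by simp
    have c1: "measure unit_leb ({0..<1} - A) = 1 - measure unit_leb A"
      using UL.prob_compl[OF A] by simp
    have c2: "measure \<mu> ({0..<1} - A) = 1 - measure \<mu> A"
      using P.prob_compl[of A] A smu spmu by simp
    have "measure \<mu> A = measure unit_leb A" using r1 r2 c1 c2 by linarith
    then show "emeasure \<mu> A = emeasure unit_leb A"
      using P.emeasure_eq_measure[of A] UL.emeasure_eq_measure[of A] by simp
  qed
qed

lemma acip_Tmap_nat:
  fixes N :: nat assumes N: "N \<ge> 2"
  shows "acip (Tmap N) = unit_leb"
  unfolding acip_def
  using N by (intro the_equality acip_lambda acip_unique) auto

lemma Tmap_meas_gen: "sets M = sets unit_leb \<Longrightarrow> sets N = sets unit_leb \<Longrightarrow> Tmap d \<in> M \<rightarrow>\<^sub>M N"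
  using Tmap_meas[of d] measurable_cong_sets by blast

lemma Tmap_comp_meas_gen: "sets M = sets unit_leb \<Longrightarrow> sets N = sets unit_leb \<Longrightarrow> Tmap d \<circ> Tmap e \<in> M \<rightarrow>\<^sub>M N"
  by (rule measurable_comp[OF Tmap_meas_gen Tmap_meas_gen]) auto

lemma acip_swap:
  fixes N1 N :: nat
  assumes N1: "N1 > 0" and N: "N \<ge> 2" and c: "c \<noteq> 0" and comp: "Tmap N1 \<circ> Tmap c = Tmap N"
  shows "acip (Tmap c \<circ> Tmap N1) = distr unit_leb unit_leb (Tmap c)"
  unfolding acip_def
proof (rule the_equality)
  let ?nu = "distr unit_leb unit_leb (Tmap c)"
  have snu: "sets ?nu = sets unit_leb" by simp
  show "is_acip (Tmap c \<circ> Tmap N1) ?nu"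
    unfolding is_acip_def
  proof (intro conjI)
    show "sets ?nu = sets unit_leb" by simp
    show "prob_space ?nu" using Tmap_meas by (rule UL.prob_space_distr)
    show "absolutely_continuous unit_leb ?nu"
      unfolding absolutely_continuous_def
    proof
      fix A assume A: "A \<in> null_sets unit_leb"
      then have "emeasure ?nu A = 0" using Tmap_null[OF c] Tmap_meas
        by (simp add: emeasure_distr null_sets_def)
      then show "A \<in> null_sets ?nu" using A by (simp add: null_sets_def)
    qed
    show "Tmap c \<circ> Tmap N1 \<in> ?nu \<rightarrow>\<^sub>M ?nu"
      by (rule Tmap_comp_meas_gen) simp_all
    have "distr ?nu ?nu (Tmap c \<circ> Tmap N1) = distr unit_leb ?nu ((Tmap c \<circ> Tmap N1) \<circ> Tmap c)"
      by (rule distr_distr) (rule Tmap_comp_meas_gen, simp_all add: Tmap_meas)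
    also have "(Tmap c \<circ> Tmap N1) \<circ> Tmap c = Tmap c \<circ> Tmap N"
      using comp by (simp add: comp_assoc)
    also have "distr unit_leb ?nu (Tmap c \<circ> Tmap N) = distr (distr unit_leb unit_leb (Tmap N)) ?nu (Tmap c)"
      by (rule distr_distr[symmetric]) (rule Tmap_meas_gen, simp_all add: Tmap_meas)
    also have "distr unit_leb unit_leb (Tmap N) = unit_leb" using N by (intro lambda_inv) auto
    also have "distr unit_leb ?nu (Tmap c) = ?nu"
      by (rule distr_cong) simp_all
    finally show "distr ?nu ?nu (Tmap c \<circ> Tmap N1) = ?nu" .
  qed
next
  fix \<mu> assume mu: "is_acip (Tmap c \<circ> Tmap N1) \<mu>"
  have smu: "sets \<mu> = sets unit_leb" and pmu: "prob_space \<mu>"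
    and acmu: "absolutely_continuous unit_leb \<mu>"
    and fmu: "Tmap c \<circ> Tmap N1 \<in> \<mu> \<rightarrow>\<^sub>M \<mu>" and imu: "distr \<mu> \<mu> (Tmap c \<circ> Tmap N1) = \<mu>"
    using mu by (auto simp: is_acip_def)
  have spmu: "space \<mu> = {0..<1}" using sets_eq_imp_space_eq[OF smu] by simp
  let ?mu' = "distr \<mu> unit_leb (Tmap N1)"
  have smu': "sets ?mu' = sets unit_leb" by simp
  have m1: "Tmap N1 \<in> \<mu> \<rightarrow>\<^sub>M unit_leb" by (rule Tmap_meas_gen) (simp_all add: smu)
  have "is_acip (Tmap N) ?mu'"
    unfolding is_acip_def
  proof (intro conjI)
    show "sets ?mu' = sets unit_leb" by simp
    show "prob_space ?mu'" using pmu m1 by (rule prob_space.prob_space_distr)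
    show "absolutely_continuous unit_leb ?mu'"
      unfolding absolutely_continuous_def
    proof
      fix A assume A: "A \<in> null_sets unit_leb"
      have P: "Tmap N1 -` A \<inter> space unit_leb \<in> null_sets unit_leb"
        using Tmap_null[of N1 A] N1 A measurable_sets[OF Tmap_meas, of A N1] by (auto simp: null_sets_def)
      then have "Tmap N1 -` A \<inter> space \<mu> \<in> null_sets \<mu>"
        using acmu spmu by (auto simp: absolutely_continuous_def)
      then have "emeasure ?mu' A = 0" using A m1
        by (simp add: emeasure_distr null_sets_def)
      then show "A \<in> null_sets ?mu'" using A by (simp add: null_sets_def)
    qed
    show "Tmap N \<in> ?mu' \<rightarrow>\<^sub>M ?mu'" by (rule Tmap_meas_gen) simp_all
    have "distr ?mu' ?mu' (Tmap N) = distr \<mu> ?mu' (Tmap N \<circ> Tmap N1)"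
      by (rule distr_distr) (rule Tmap_meas_gen, simp_all add: m1)
    also have "Tmap N \<circ> Tmap N1 = Tmap N1 \<circ> (Tmap c \<circ> Tmap N1)"
      using comp[symmetric] by (simp add: comp_assoc)
    also have "distr \<mu> ?mu' (Tmap N1 \<circ> (Tmap c \<circ> Tmap N1)) = distr (distr \<mu> \<mu> (Tmap c \<circ> Tmap N1)) ?mu' (Tmap N1)"
      by (rule distr_distr[symmetric]) (rule Tmap_meas_gen, simp_all add: smu fmu)
    also have "distr \<mu> \<mu> (Tmap c \<circ> Tmap N1) = \<mu>" by (rule imu)
    also have "distr \<mu> ?mu' (Tmap N1) = ?mu'"
      by (rule distr_cong) simp_all
    finally show "distr ?mu' ?mu' (Tmap N) = ?mu'" .
  qed
  then have mu'eq: "?mu' = unit_leb" using N by (intro acip_unique) auto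
  have "\<mu> = distr \<mu> \<mu> (Tmap c \<circ> Tmap N1)" using imu by simp
  also have "\<dots> = distr ?mu' \<mu> (Tmap c)"
    by (rule distr_distr[symmetric]) (rule Tmap_meas_gen, simp_all add: smu m1)
  also have "\<dots> = distr unit_leb unit_leb (Tmap c)"
    unfolding mu'eq by (rule distr_cong) (simp_all add: smu)
  finally show "\<mu> = distr unit_leb unit_leb (Tmap c)" .
qed

lemma comp_int:
  fixes p q k :: int assumes "q \<noteq> 0"
  shows "Tmap (real_of_int (k*q)) \<circ> Tmap (real_of_int p / real_of_int q) = Tmap (real_of_int (k*p))"
proof
  fix x
  have "(Tmap (real_of_int (k*q)) \<circ> Tmap (real_of_int p / real_of_int q)) x
      = frac (real_of_int (k*q) * frac (real_of_int p / real_of_int q * x))"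
    by (simp add: Tmap_def)
  also have "\<dots> = frac (real_of_int (k*q) * (real_of_int p / real_of_int q * x))"
    by (rule frac_int_mult_frac)
  also have "real_of_int (k*q) * (real_of_int p / real_of_int q * x) = real_of_int (k*p) * x"
  proof -
    have "real_of_int q \<noteq> 0" using assms by simp
    then show ?thesis by simp
  qed
  finally show "(Tmap (real_of_int (k*q)) \<circ> Tmap (real_of_int p / real_of_int q)) x = Tmap (real_of_int (k*p)) x"
    by (simp add: Tmap_def)
qed

lemma mu_comp_k:
  fixes p q k :: int
  assumes "p > q" and "q > 1" and "k \<ge> 1"
  shows "mu_comp (real_of_int (k*q)) (real_of_int p / real_of_int q) = unit_leb"
    and "mu_comp (real_of_int p / real_of_int q) (real_of_int (k*q)) = distr unit_leb unit_leb (Tmap (real_of_int p / real_of_int q))"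
proof -
  have "1 * p \<le> k * p" using assms by (intro mult_right_mono) auto
  then have kp: "k*p \<ge> 2" using assms by linarith
  have "1 * q \<le> k * q" using assms by (intro mult_right_mono) auto
  then have kq: "k*q \<ge> 1" using assms by linarith
  have e1: "real_of_int (k*p) = real (nat (k*p))" using kp by (intro of_nat_nat[symmetric]) simp
  have e2: "real_of_int (k*q) = real (nat (k*q))" using kq by (intro of_nat_nat[symmetric]) simp
  have cmp: "Tmap (real (nat (k*q))) \<circ> Tmap (real_of_int p / real_of_int q) = Tmap (real (nat (k*p)))"
    unfolding e1[symmetric] e2[symmetric] by (rule comp_int) (use assms in simp)
  have kp2: "2 \<le> nat (k*p)" using kp by linarith
  have kq1: "0 < nat (k*q)" using kq by linarith
  have c0: "real_of_int p / real_of_int q \<noteq> 0" using assms by simp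
  show "mu_comp (real_of_int (k*q)) (real_of_int p / real_of_int q) = unit_leb"
    unfolding mu_comp_def e2 cmp by (rule acip_Tmap_nat[OF kp2])
  show "mu_comp (real_of_int p / real_of_int q) (real_of_int (k*q)) = distr unit_leb unit_leb (Tmap (real_of_int p / real_of_int q))"
    unfolding mu_comp_def e2 by (rule acip_swap[OF kq1 kp2 c0 cmp])
qed

theorem proposition3p1:
  fixes p q k l :: int
  assumes "p > q" and "q > 1" and "coprime p q"
    and "k \<ge> 1" and "l \<ge> 1"
  shows "mu_alt (real_of_int p / real_of_int q) (k * q) = mu_alt (real_of_int p / real_of_int q) (l * q)"
proof -
  note k = mu_comp_k[OF assms(1,2,4)] and l = mu_comp_k[OF assms(1,2,5)]
  show ?thesis unfolding mu_alt_def k l by (rule refl)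
qed

end
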